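(* Let $X,Y$ be real Hilbert spaces, $A\colon X\to Y$ compact linear with $\|A\|=1$, let $X_N\subset X$ be a linear subspace of dimension $N$, and $A_N=A|_{X_N}$. Let $\rho>0$, $C>0$, and assume: (i) $x^\dagger=A^\ast z\in X_N$ for some $z\in\operatorname{range}(A_N)$ with $\|z\|\le\rho$; (ii) for all $0<\alpha\le1$, the operator norm of $(\alpha I+A^\ast A)^{-1}A^\ast$ restricted to $\operatorname{range}(A_N)$ (as a map $\operatorname{range}(A_N)\to X$) is at most $CN$. Let $y^\dagger=Ax^\dagger$, $\delta\ge0$, and $y^\delta\in Y$ with $\|y^\delta-y^\dagger\|\le\delta$. Then for every $0<\alpha\le1$, $$\|T_\alpha y^\delta-x^\dagger\|\le\frac{\delta}{2\sqrt\alpha}+\begin{cases}\frac{\sqrt\alpha}{2}\rho&\text{if } \frac{1}{2CN}<\sqrt\alpha\le1,\\[1mm] \alpha CN\rho&\text{if }\sqrt\alpha\le\frac{1}{2CN}.\end{cases}$$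
   Context: $A^\ast$ denotes the adjoint of $A$ and $T_\alpha y=(A^\ast A+\alpha I)^{-1}A^\ast y$ is Tikhonov regularization with parameter $\alpha>0$. *)

theory Defs
  imports "HOL-Analysis.Analysis"
begin

definition compact_operator :: "('a::real_normed_vector \<Rightarrow> 'b::real_normed_vector) \<Rightarrow> bool" where
  "compact_operator A \<longleftrightarrow> bounded_linear A \<and> compact (closure (A ` cball 0 1))"

definition subspace_of_dim :: "'a::real_vector set \<Rightarrow> nat \<Rightarrow> bool" where
  "subspace_of_dim V N \<longleftrightarrow> subspace V \<and>
     (\<exists>B. finite B \<and> independent B \<and> span B = V \<and> card B = N)"

definition tikhonov :: "('a::real_inner \<Rightarrow> 'b::real_inner) \<Rightarrow> real \<Rightarrow> 'b \<Rightarrow> 'a" where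
  "tikhonov A \<alpha> y = (THE x. adjoint A (A x) + \<alpha> *\<^sub>R x = adjoint A y)"

end

theory Submission
  imports Defs
begin

lemma lax_exists:
  fixes A :: "'a::{real_inner,complete_space} \<Rightarrow> 'b::real_inner" and \<phi> :: "'a \<Rightarrow> real"
  assumes bA: "bounded_linear A" and b\<phi>: "bounded_linear \<phi>" and al: "\<alpha> > 0"
  shows "\<exists>w. \<forall>v. A w \<bullet> A v + \<alpha> * (w \<bullet> v) = \<phi> v"
proof -
  interpret A: bounded_linear A by fact
  interpret P: bounded_linear \<phi> by fact
  define q where "q x = A x \<bullet> A x + \<alpha> * (x \<bullet> x)" for x
  define J where "J x = q x - 2 * \<phi> x" for x
  obtain K where K: "\<And>x. norm (\<phi> x) \<le> norm x * K" using P.bounded by blast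
  define M where "M = \<bar>K\<bar>"
  have phiM: "\<phi> x \<le> M * norm x" for x
    using K[of x] unfolding M_def
    by (smt (verit, best) mult.commute mult_left_mono norm_ge_zero real_norm_def)
  have qge: "q x \<ge> \<alpha> * (norm x)^2" for x
    unfolding q_def by (simp add: power2_norm_eq_inner)
  have Jlow: "J x \<ge> - (M^2 / \<alpha>)" for x
  proof -
    have "J x \<ge> \<alpha> * (norm x)^2 - 2 * (M * norm x)"
      using qge[of x] phiM[of x] unfolding J_def by linarith
    moreover have "\<alpha> * (norm x)^2 - 2 * (M * norm x) \<ge> - (M^2 / \<alpha>)"
    proof -
      have "0 \<le> (\<alpha> * norm x - M)^2" by simp
      hence "0 \<le> \<alpha> * (\<alpha> * (norm x)^2 - 2 * (M * norm x)) + M^2"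
        by (simp add: power2_eq_square algebra_simps)
      thus ?thesis using al by (simp add: field_simps)
    qed
    ultimately show ?thesis by linarith
  qed
  define m where "m = Inf (range J)"
  have bdd: "bdd_below (range J)" using Jlow by (intro bdd_belowI[of _ "- (M^2 / \<alpha>)"]) auto
  have mle: "m \<le> J x" for x unfolding m_def using bdd by (simp add: cInf_lower)
  have "\<forall>n. \<exists>x. J x < m + 1 / real (Suc n)"
  proof
    fix n
    have "Inf (range J) < m + 1 / real (Suc n)" unfolding m_def by simp
    from cInf_lessD[OF _ this] show "\<exists>x. J x < m + 1 / real (Suc n)" by auto
  qed
  then obtain x where x: "\<And>n. J (x n) < m + 1 / real (Suc n)" by metis
  have par: "q (a - b) / 2 = J a + J b - 2 * J ((1/2) *\<^sub>R (a + b))" for a b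
    unfolding J_def q_def
    by (simp add: A.diff A.add A.scale P.add P.scale inner_diff_left inner_diff_right
        inner_add_left inner_add_right algebra_simps)
       (simp add: inner_commute field_simps)
  have dist_bound: "\<alpha> * (norm (x n - x k))^2 \<le> 2 * (1 / real (Suc n) + 1 / real (Suc k))" for n k
  proof -
    have "q (x n - x k) / 2 \<le> (m + 1 / real (Suc n)) + (m + 1 / real (Suc k)) - 2 * m"
      using par[of "x n" "x k"] x[of n] x[of k] mle[of "(1/2) *\<^sub>R (x n + x k)"] by linarith
    thus ?thesis using qge[of "x n - x k"] by (smt (verit) field_sum_of_halves)
  qed
  have "Cauchy x"
  proof (rule CauchyI)
    fix e :: real assume e: "e > 0"
    obtain N where N: "4 / (\<alpha> * e^2) < real (Suc N)"
      using reals_Archimedean2 by (metis less_Suc_eq of_nat_Suc of_nat_less_iff order_less_trans)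
    show "\<exists>N. \<forall>m\<ge>N. \<forall>n\<ge>N. norm (x m - x n) < e"
    proof (intro exI[of _ N] allI impI)
      fix a b assume ab: "N \<le> a" "N \<le> b"
      have pos: "\<alpha> * e^2 > 0" using al e by simp
      define ia where "ia = 1 / real (Suc a)"
      define ib where "ib = 1 / real (Suc b)"
      define iN where "iN = 1 / real (Suc N)"
      have h1: "ia \<le> iN" unfolding ia_def iN_def using ab by (simp add: frac_le)
      have h2: "ib \<le> iN" unfolding ib_def iN_def using ab by (simp add: frac_le)
      have h4: "iN < \<alpha> * e^2 / 4" unfolding iN_def
        using N pos by (simp add: field_simps)
      have db: "\<alpha> * (norm (x a - x b))^2 \<le> 2 * (ia + ib)"
        unfolding ia_def ib_def by (rule dist_bound)
      have "\<alpha> * (norm (x a - x b))^2 < \<alpha> * e^2"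
        using db h1 h2 h4 by (simp only: distrib_left)
      hence "(norm (x a - x b))^2 < e^2" using al by simp
      thus "norm (x a - x b) < e" using e power2_less_imp_less[of "norm (x a - x b)" e] by simp
    qed
  qed
  then obtain w where w: "x \<longlonglongrightarrow> w" using Cauchy_convergent_iff convergent_def by blast
  have "(\<lambda>n. J (x n)) \<longlonglongrightarrow> J w"
    unfolding J_def q_def
    by (intro tendsto_intros A.tendsto P.tendsto w)
  moreover have "(\<lambda>n. m + 1 / real (Suc n)) \<longlonglongrightarrow> m"
    using LIMSEQ_inverse_real_of_nat_add[of m] by (simp add: inverse_eq_divide add.commute)
  ultimately have "J w \<le> m"
    by (rule LIMSEQ_le) (use x less_imp_le in blast)
  hence wmin: "J w \<le> J y" for y using mle[of y] by linarith
  show ?thesis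
  proof (intro exI allI)
    fix v
    define B where "B = A w \<bullet> A v + \<alpha> * (w \<bullet> v) - \<phi> v"
    have exp: "J (w + t *\<^sub>R v) = J w + 2 * t * B + t^2 * q v" for t
      unfolding J_def q_def B_def
      by (simp add: A.add A.scale P.add P.scale inner_add_left inner_add_right
          inner_commute power2_eq_square algebra_simps)
    have q0: "q v \<ge> 0" using qge[of v] al by (smt (verit) mult_nonneg_nonneg zero_le_power2)
    show "A w \<bullet> A v + \<alpha> * (w \<bullet> v) = \<phi> v"
    proof (rule ccontr)
      assume "A w \<bullet> A v + \<alpha> * (w \<bullet> v) \<noteq> \<phi> v"
      hence Bn: "B \<noteq> 0" unfolding B_def by simp
      define t where "t = - B / (q v + 1)"
      have qp: "q v + 1 \<noteq> 0" using q0 by linarith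
      have Bt: "B = - t * (q v + 1)" unfolding t_def using qp by simp
      have tn: "t \<noteq> 0" using Bt Bn by auto
      have "2 * t * B + t^2 * q v = - (t^2 * (q v + 2))"
        unfolding Bt by (simp add: power2_eq_square algebra_simps)
      also have "\<dots> < 0" using tn q0 by (simp add: mult_pos_pos)
      finally have "J (w + t *\<^sub>R v) < J w" using exp[of t] by linarith
      thus False using wmin[of "w + t *\<^sub>R v"] by linarith
    qed
  qed
qed

lemma riesz:
  fixes A :: "'a::{real_inner,complete_space} \<Rightarrow> 'b::real_inner"
  assumes bA: "bounded_linear A"
  shows "\<exists>w. \<forall>x. A x \<bullet> y = x \<bullet> w"
proof -
  have b0: "bounded_linear (\<lambda>x::'a. 0::'a)" by (rule bounded_linear_zero)
  have bp: "bounded_linear (\<lambda>x. A x \<bullet> y)"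
    using bounded_linear_compose[OF bounded_linear_inner_left bA] by (simp add: o_def)
  obtain w where "\<forall>v. (0::'a) \<bullet> 0 + 1 * (w \<bullet> v) = A v \<bullet> y"
    using lax_exists[OF b0 bp, of 1] by (meson zero_less_one)
  hence "\<forall>x. A x \<bullet> y = x \<bullet> w" by (simp add: inner_commute)
  thus ?thesis by blast
qed

lemma adjoint_works':
  fixes A :: "'a::{real_inner,complete_space} \<Rightarrow> 'b::real_inner"
  assumes bA: "bounded_linear A"
  shows "x \<bullet> adjoint A y = A x \<bullet> y"
proof -
  have "\<forall>y. \<exists>w. \<forall>x. A x \<bullet> y = x \<bullet> w" using riesz[OF bA] by blast
  from choice[OF this] obtain f where f: "\<forall>y. \<forall>x. A x \<bullet> y = x \<bullet> f y" by (elim exE)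
  have ex: "\<exists>f'. \<forall>x y. A x \<bullet> y = x \<bullet> f' y"
  proof (intro exI[of _ f] allI)
    fix x y show "A x \<bullet> y = x \<bullet> f y" using f by blast
  qed
  have "\<forall>x y. A x \<bullet> y = x \<bullet> adjoint A y" unfolding adjoint_def by (rule someI_ex[OF ex])
  hence "A x \<bullet> y = x \<bullet> adjoint A y" by blast
  thus ?thesis by (rule sym)
qed

lemma inner_ext:
  fixes a b :: "'a::real_inner"
  assumes "\<And>v. v \<bullet> a = v \<bullet> b" shows "a = b"
proof -
  have "(a - b) \<bullet> (a - b) = 0" using assms[of "a - b"] by (simp add: inner_diff_right)
  thus ?thesis by simp
qed

definition Wt :: "('a::real_inner \<Rightarrow> 'b::real_inner) \<Rightarrow> real \<Rightarrow> 'b \<Rightarrow> 'a \<Rightarrow> bool" where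
  "Wt A \<alpha> y x \<longleftrightarrow> (\<forall>v. A v \<bullet> A x + \<alpha> * (v \<bullet> x) = A v \<bullet> y)"

lemma Wt_unique:
  assumes lA: "linear A" and al: "\<alpha> > 0" and "Wt A \<alpha> y x" "Wt A \<alpha> y x'"
  shows "x = x'"
proof -
  interpret A: linear A by fact
  define d where "d = x - x'"
  have "A d \<bullet> A x + \<alpha> * (d \<bullet> x) = A d \<bullet> A x' + \<alpha> * (d \<bullet> x')"
    using assms(3,4) unfolding Wt_def by metis
  hence "A d \<bullet> A d + \<alpha> * (d \<bullet> d) = 0"
    unfolding d_def by (simp add: A.diff inner_diff_right algebra_simps)
  moreover have "A d \<bullet> A d \<ge> 0" "d \<bullet> d \<ge> 0" by auto
  moreover have "\<alpha> * (d \<bullet> d) \<ge> 0" using al by simp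
  ultimately have "\<alpha> * (d \<bullet> d) = 0" by linarith
  hence "d = 0" using al by simp
  thus ?thesis unfolding d_def by simp
qed

lemma Wt_tikhonov:
  fixes A :: "'a::{real_inner,complete_space} \<Rightarrow> 'b::real_inner"
  assumes bA: "bounded_linear A" and al: "\<alpha> > 0"
  shows "Wt A \<alpha> y (tikhonov A \<alpha> y)"
proof -
  interpret A: bounded_linear A by fact
  have lA: "linear A" using bA bounded_linear.linear by blast
  have NW: "adjoint A (A x) + \<alpha> *\<^sub>R x = adjoint A y \<longleftrightarrow> Wt A \<alpha> y x" for x
  proof
    assume h: "adjoint A (A x) + \<alpha> *\<^sub>R x = adjoint A y"
    show "Wt A \<alpha> y x" unfolding Wt_def
    proof
      fix v
      have "v \<bullet> (adjoint A (A x) + \<alpha> *\<^sub>R x) = v \<bullet> adjoint A y" using h by simp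
      thus "A v \<bullet> A x + \<alpha> * (v \<bullet> x) = A v \<bullet> y"
        by (simp add: inner_add_right adjoint_works'[OF bA])
    qed
  next
    assume h: "Wt A \<alpha> y x"
    show "adjoint A (A x) + \<alpha> *\<^sub>R x = adjoint A y"
    proof (rule inner_ext)
      fix v
      show "v \<bullet> (adjoint A (A x) + \<alpha> *\<^sub>R x) = v \<bullet> adjoint A y"
        using h unfolding Wt_def by (simp add: inner_add_right adjoint_works'[OF bA])
    qed
  qed
  have bphi: "bounded_linear (\<lambda>v. A v \<bullet> y)"
    using bounded_linear_compose[OF bounded_linear_inner_left bA] by (simp add: o_def)
  from lax_exists[OF bA bphi al] obtain w where w: "\<forall>v. A w \<bullet> A v + \<alpha> * (w \<bullet> v) = A v \<bullet> y"
    by blast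
  have Ww: "Wt A \<alpha> y w" unfolding Wt_def using w by (simp add: inner_commute)
  have ex1: "\<exists>!x. adjoint A (A x) + \<alpha> *\<^sub>R x = adjoint A y"
  proof (rule ex1I[of _ w])
    show "adjoint A (A w) + \<alpha> *\<^sub>R w = adjoint A y" using NW Ww by blast
  next
    fix x assume "adjoint A (A x) + \<alpha> *\<^sub>R x = adjoint A y"
    hence "Wt A \<alpha> y x" using NW by blast
    thus "x = w" using Wt_unique[OF lA al _ Ww] by blast
  qed
  have "adjoint A (A (tikhonov A \<alpha> y)) + \<alpha> *\<^sub>R tikhonov A \<alpha> y = adjoint A y"
    unfolding tikhonov_def by (rule theI'[OF ex1])
  thus ?thesis using NW by blast
qed

lemma Wt_bound:
  assumes lA: "linear A" and al: "\<alpha> > 0" and W: "Wt A \<alpha> y x"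
  shows "norm x \<le> norm y / (2 * sqrt \<alpha>)"
proof -
  have e: "A x \<bullet> A x + \<alpha> * (x \<bullet> x) = A x \<bullet> y" using W unfolding Wt_def by blast
  have "A x \<bullet> y \<le> norm (A x) * norm y" by (rule norm_cauchy_schwarz)
  hence "(norm (A x))^2 + \<alpha> * (norm x)^2 \<le> norm (A x) * norm y"
    using e by (simp add: power2_norm_eq_inner)
  moreover have "norm (A x) * norm y \<le> (norm (A x))^2 + (norm y)^2 / 4"
  proof -
    have "0 \<le> (norm (A x) - norm y / 2)^2" by simp
    thus ?thesis by (simp add: power2_eq_square algebra_simps)
  qed
  ultimately have "4 * \<alpha> * (norm x)^2 \<le> (norm y)^2" by linarith
  hence "(2 * sqrt \<alpha> * norm x)^2 \<le> (norm y)^2"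
    using al by (simp add: power_mult_distrib)
  hence "2 * sqrt \<alpha> * norm x \<le> norm y"
    by (rule power2_le_imp_le) simp
  thus ?thesis using al by (simp add: field_simps)
qed

lemma Wt_diff:
  assumes lA: "linear A" and "Wt A \<alpha> y1 x1" "Wt A \<alpha> y2 x2"
  shows "Wt A \<alpha> (y1 - y2) (x1 - x2)"
proof -
  interpret A: linear A by fact
  show ?thesis using assms(2,3) unfolding Wt_def
    by (simp add: A.diff inner_diff_right algebra_simps)
qed

lemma Wt_scale:
  assumes lA: "linear A" and "Wt A \<alpha> y x"
  shows "Wt A \<alpha> (c *\<^sub>R y) (c *\<^sub>R x)"
proof -
  interpret A: linear A by fact
  show ?thesis unfolding Wt_def
  proof
    fix v
    have "A v \<bullet> A x + \<alpha> * (v \<bullet> x) = A v \<bullet> y" using assms(2) unfolding Wt_def by blast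
    hence "c * (A v \<bullet> A x + \<alpha> * (v \<bullet> x)) = c * (A v \<bullet> y)" by simp
    thus "A v \<bullet> A (c *\<^sub>R x) + \<alpha> * (v \<bullet> c *\<^sub>R x) = A v \<bullet> c *\<^sub>R y"
      by (simp add: A.scale algebra_simps)
  qed
qed

theorem theorem2:
  fixes A :: "'x::{real_inner,complete_space} \<Rightarrow> 'y::{real_inner,complete_space}"
    and XN :: "'x set" and N :: nat
    and \<rho> C \<delta> \<alpha> :: real
    and z :: 'y and xdag :: 'x and ydelta :: 'y
  assumes compA: "compact_operator A"
    and normA: "onorm A = 1"
    and XN: "subspace_of_dim XN N"
    and rho: "\<rho> > 0" and Cpos: "C > 0"
    and src: "xdag = adjoint A z" "xdag \<in> XN" "z \<in> A ` XN" "norm z \<le> \<rho>"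
    and stab: "\<And>\<beta> y. 0 < \<beta> \<Longrightarrow> \<beta> \<le> 1 \<Longrightarrow> y \<in> A ` XN \<Longrightarrow>
                 norm (tikhonov A \<beta> y) \<le> C * real N * norm y"
    and delta: "\<delta> \<ge> 0"
    and noise: "norm (ydelta - A xdag) \<le> \<delta>"
    and alpha: "0 < \<alpha>" "\<alpha> \<le> 1"
  shows "norm (tikhonov A \<alpha> ydelta - xdag) \<le>
           \<delta> / (2 * sqrt \<alpha>) +
           (if 1 / (2 * C * real N) < sqrt \<alpha> then sqrt \<alpha> / 2 * \<rho>
            else \<alpha> * C * real N * \<rho>)"
proof -
  have bA: "bounded_linear A" using compA unfolding compact_operator_def by blast
  have lA: "linear A" using bA bounded_linear.linear by blast
  interpret A: bounded_linear A by fact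
  define T where "T = tikhonov A \<alpha>"
  have al: "\<alpha> > 0" using alpha by simp
  have sa: "sqrt \<alpha> > 0" using al by simp
  have W1: "Wt A \<alpha> ydelta (T ydelta)" unfolding T_def by (rule Wt_tikhonov[OF bA al])
  have W2: "Wt A \<alpha> (A xdag) (T (A xdag))" unfolding T_def by (rule Wt_tikhonov[OF bA al])
  have W3: "Wt A \<alpha> z (T z)" unfolding T_def by (rule Wt_tikhonov[OF bA al])
  have b1: "norm (T ydelta - T (A xdag)) \<le> \<delta> / (2 * sqrt \<alpha>)"
  proof -
    have "norm (T ydelta - T (A xdag)) \<le> norm (ydelta - A xdag) / (2 * sqrt \<alpha>)"
      by (rule Wt_bound[OF lA al Wt_diff[OF lA W1 W2]])
    also have "\<dots> \<le> \<delta> / (2 * sqrt \<alpha>)"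
      using noise sa by (simp add: divide_right_mono)
    finally show ?thesis .
  qed
  define u where "u = T (A xdag) - xdag"
  have xz: "v \<bullet> xdag = A v \<bullet> z" for v
    using src(1) adjoint_works'[OF bA, of v z] by simp
  have Wu: "Wt A \<alpha> ((- \<alpha>) *\<^sub>R z) u"
    unfolding Wt_def
  proof
    fix v
    have "A v \<bullet> A (T (A xdag)) + \<alpha> * (v \<bullet> T (A xdag)) = A v \<bullet> A xdag"
      using W2 unfolding Wt_def by blast
    thus "A v \<bullet> A u + \<alpha> * (v \<bullet> u) = A v \<bullet> (- \<alpha>) *\<^sub>R z"
      unfolding u_def using xz[of v] by (simp add: A.diff inner_diff_right algebra_simps)
  qed
  have u_eq: "u = (- \<alpha>) *\<^sub>R T z"
    by (rule Wt_unique[OF lA al Wu Wt_scale[OF lA W3]])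
  have nu: "norm u = \<alpha> * norm (T z)" using u_eq al by simp
  have tz1: "norm (T z) \<le> norm z / (2 * sqrt \<alpha>)" by (rule Wt_bound[OF lA al W3])
  have tz2: "norm (T z) \<le> C * real N * norm z"
    unfolding T_def by (rule stab[OF al alpha(2) src(3)])
  have "tikhonov A \<alpha> ydelta - xdag = (T ydelta - T (A xdag)) + u"
    unfolding u_def T_def by simp
  hence main: "norm (tikhonov A \<alpha> ydelta - xdag) \<le> \<delta> / (2 * sqrt \<alpha>) + \<alpha> * norm (T z)"
    using b1 nu norm_triangle_ineq[of "T ydelta - T (A xdag)" u] by simp
  have c1: "\<alpha> * norm (T z) \<le> sqrt \<alpha> / 2 * \<rho>"
  proof -
    have "\<alpha> * norm (T z) \<le> \<alpha> * (norm z / (2 * sqrt \<alpha>))"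
      using tz1 al by (intro mult_left_mono) auto
    also have "\<alpha> * (norm z / (2 * sqrt \<alpha>)) = sqrt \<alpha> / 2 * norm z"
    proof -
      have "\<alpha> = sqrt \<alpha> * sqrt \<alpha>" using al by simp
      hence "\<alpha> * (norm z / (2 * sqrt \<alpha>)) = sqrt \<alpha> * sqrt \<alpha> * (norm z / (2 * sqrt \<alpha>))"
        by simp
      also have "\<dots> = sqrt \<alpha> / 2 * norm z" using sa by (simp add: field_simps)
      finally show ?thesis .
    qed
    also have "\<dots> \<le> sqrt \<alpha> / 2 * \<rho>" using src(4) sa by (simp add: mult_left_mono)
    finally show ?thesis .
  qed
  have c2: "\<alpha> * norm (T z) \<le> \<alpha> * C * real N * \<rho>"
  proof -
    have "\<alpha> * norm (T z) \<le> \<alpha> * (C * real N * norm z)"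
      using tz2 al by (simp add: mult_left_mono)
    also have "\<dots> \<le> \<alpha> * (C * real N * \<rho>)"
      using src(4) al Cpos by (intro mult_left_mono) auto
    finally show ?thesis by (simp add: mult.assoc)
  qed
  show ?thesis using main c1 c2 by auto
qed

end
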